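(* Let $(\boldsymbol{x}^1,\boldsymbol{x}^2)\in(\mathbb{T}^3\times\mathbb{T}^3)\setminus\Delta$ with $\boldsymbol{x}^j=(x^j,y^j,z^j)$, and assume $x^1-x^2=0$ and $y^1-y^2=0$. For $\omega_1,\omega_2,\dots\in\Omega_0$ set $\boldsymbol{x}^j_0=\boldsymbol{x}^j$ and $\boldsymbol{x}^j_n=f_{\omega_n}(\boldsymbol{x}^j_{n-1})$, $j=1,2$. Then for any $\varepsilon>0$ and any $\overline{\boldsymbol{x}}\in\mathbb{T}^3$ there exist $N_2\in\mathbb{N}$ and $(\omega_1,\dots,\omega_{N_2})\in\Omega_0^{N_2}$ such that $$\mathrm{dist}_{\mathbb{T}^3}(\boldsymbol{x}^1_{N_2},\overline{\boldsymbol{x}})<\varepsilon\qquad\text{and}\qquad \mathrm{dist}_{\mathbb{T}^3}(\overline{\boldsymbol{x}},\boldsymbol{x}^2_{N_2})=\mathrm{dist}_{\mathbb{T}^3}(\boldsymbol{x}^1,\boldsymbol{x}^2).$$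
   Context: $\mathbb{T}^3=\mathbb{R}^3/(2\pi\mathbb{Z})^3$ with its standard flat distance $\mathrm{dist}_{\mathbb{T}^3}$; $\Delta=\{(\boldsymbol{x}^1,\boldsymbol{x}^2):\boldsymbol{x}^1=\boldsymbol{x}^2\}$. Fix $U>0$ and let $\Omega_0=[-U,U]^3\times[0,2\pi)^3$, with elements $\omega=(\mathsf{A},\mathsf{B},\mathsf{C},\alpha,\beta,\gamma)$. Define maps of $\mathbb{T}^3$: $f_{(\mathsf{A},\alpha)}(x,y,z)=(x+\mathsf{A}\sin(z+\alpha),\ y+\mathsf{A}\cos(z+\alpha),\ z)$, $f_{(\mathsf{B},\beta)}(x,y,z)=(x,\ y+\mathsf{B}\sin(x+\beta),\ z+\mathsf{B}\cos(x+\beta))$, $f_{(\mathsf{C},\gamma)}(x,y,z)=(x+\mathsf{C}\cos(y+\gamma),\ y,\ z+\mathsf{C}\sin(y+\gamma))$, and $f_\omega=f_{(\mathsf{C},\gamma)}\circ f_{(\mathsf{B},\beta)}\circ f_{(\mathsf{A},\alpha)}$. *)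

theory Defs
  imports "HOL-Analysis.Analysis"
begin

text \<open>Points of the torus T^3 = R^3/(2 pi Z)^3 are represented by real
representatives (x,y,z). All notions below are invariant under changing
representatives by multiples of 2 pi in each coordinate.\<close>

type_synonym pt3 = "real \<times> real \<times> real"

definition circ_dist :: "real \<Rightarrow> real \<Rightarrow> real" where
  "circ_dist a b = (INF k::int. \<bar>a - b - 2 * pi * of_int k\<bar>)"

definition torus_dist :: "pt3 \<Rightarrow> pt3 \<Rightarrow> real" where
  "torus_dist p q = (case p of (x1, y1, z1) \<Rightarrow> case q of (x2, y2, z2) \<Rightarrow>
      sqrt ((circ_dist x1 x2)\<^sup>2 + (circ_dist y1 y2)\<^sup>2 + (circ_dist z1 z2)\<^sup>2))"

definition circ_eq :: "real \<Rightarrow> real \<Rightarrow> bool" where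
  "circ_eq a b \<longleftrightarrow> (\<exists>k::int. a - b = 2 * pi * of_int k)"

definition torus_eq :: "pt3 \<Rightarrow> pt3 \<Rightarrow> bool" where
  "torus_eq p q = (case p of (x1, y1, z1) \<Rightarrow> case q of (x2, y2, z2) \<Rightarrow>
      circ_eq x1 x2 \<and> circ_eq y1 y2 \<and> circ_eq z1 z2)"

type_synonym param = "real \<times> real \<times> real \<times> real \<times> real \<times> real"

definition Omega0 :: "real \<Rightarrow> param set" where
  "Omega0 U = {-U..U} \<times> {-U..U} \<times> {-U..U} \<times> {0..<2*pi} \<times> {0..<2*pi} \<times> {0..<2*pi}"

definition fA :: "real \<Rightarrow> real \<Rightarrow> pt3 \<Rightarrow> pt3" where
  "fA A \<alpha> p = (case p of (x, y, z) \<Rightarrow> (x + A * sin (z + \<alpha>), y + A * cos (z + \<alpha>), z))"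

definition fB :: "real \<Rightarrow> real \<Rightarrow> pt3 \<Rightarrow> pt3" where
  "fB B \<beta> p = (case p of (x, y, z) \<Rightarrow> (x, y + B * sin (x + \<beta>), z + B * cos (x + \<beta>)))"

definition fC :: "real \<Rightarrow> real \<Rightarrow> pt3 \<Rightarrow> pt3" where
  "fC C \<gamma> p = (case p of (x, y, z) \<Rightarrow> (x + C * cos (y + \<gamma>), y, z + C * sin (y + \<gamma>)))"

definition f_omega :: "param \<Rightarrow> pt3 \<Rightarrow> pt3" where
  "f_omega \<omega> = (case \<omega> of (A, B, C, \<alpha>, \<beta>, \<gamma>) \<Rightarrow> fC C \<gamma> \<circ> fB B \<beta> \<circ> fA A \<alpha>)"

text \<open>Orbit: x_0 = x, x_n = f_{omega_n}(x_{n-1}); omega is indexed from 1.\<close>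
primrec orbit :: "(nat \<Rightarrow> param) \<Rightarrow> nat \<Rightarrow> pt3 \<Rightarrow> pt3" where
  "orbit \<omega> 0 p = p"
| "orbit \<omega> (Suc n) p = f_omega (\<omega> (Suc n)) (orbit \<omega> n p)"

end

theory Submission
  imports Defs
begin

lemma circ_eq_sin: "circ_eq u v \<Longrightarrow> sin u = sin v"
proof -
  assume "circ_eq u v"
  then obtain k::int where "u = v + 2*pi* of_int k" unfolding circ_eq_def by (auto simp: algebra_simps)
  then show ?thesis by (simp add: sin_add)
qed

lemma circ_eq_cos: "circ_eq u v \<Longrightarrow> cos u = cos v"
proof -
  assume "circ_eq u v"
  then obtain k::int where "u = v + 2*pi* of_int k" unfolding circ_eq_def by (auto simp: algebra_simps)
  then show ?thesis by (simp add: cos_add)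
qed

lemma circ_eq_refl: "circ_eq u u"
  unfolding circ_eq_def by (rule exI[of _ 0]) simp

lemma circ_eq_add: "circ_eq u v \<Longrightarrow> circ_eq (u + w) (v + w)"
  unfolding circ_eq_def by simp

lemma circ_eq_add2: "circ_eq u v \<Longrightarrow> circ_eq w r \<Longrightarrow> circ_eq (u + w) (v + r)"
  unfolding circ_eq_def
proof -
  assume "\<exists>k::int. u - v = 2 * pi * of_int k" "\<exists>k::int. w - r = 2 * pi * of_int k"
  then obtain k l :: int where "u - v = 2 * pi * of_int k" "w - r = 2 * pi * of_int l" by blast
  then have "u + w - (v + r) = 2 * pi * of_int (k + l)" by (simp add: algebra_simps)
  then show "\<exists>k::int. u + w - (v + r) = 2 * pi * of_int k" by blast
qed

lemma rep_exists: "\<exists>\<beta>. 0 \<le> \<beta> \<and> \<beta> < 2*pi \<and> circ_eq \<beta> s"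
proof -
  define k where "k = floor (s / (2*pi))"
  define \<beta> where "\<beta> = s - 2*pi* of_int k"
  have p: "2*pi > 0" by simp
  have "of_int k \<le> s/(2*pi)" "s/(2*pi) < of_int k + 1" unfolding k_def by linarith+
  then have "2*pi* of_int k \<le> s" "s < 2*pi*(of_int k + 1)"
    using p by (simp_all add: field_simps)
  then have "0 \<le> \<beta>" "\<beta> < 2*pi" unfolding \<beta>_def by (simp_all add: algebra_simps)
  moreover have "circ_eq \<beta> s" unfolding circ_eq_def \<beta>_def by (rule exI[of _ "-k"]) simp
  ultimately show ?thesis by blast
qed

lemma one_step:
  assumes "U > 0" "\<bar>a\<bar> \<le> U/2" "\<bar>b\<bar> \<le> U/2" "\<bar>c\<bar> \<le> U/2"
  shows "\<exists>w\<in>Omega0 U. \<forall>x' y' z'. circ_eq x' x \<longrightarrow> circ_eq y' y \<longrightarrow>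
            f_omega w (x', y', z') = (x' + a, y' + b, z' + c)"
proof -
  define B where "B = sqrt (b^2 + c^2)"
  have "b^2 \<le> (U/2)^2" "c^2 \<le> (U/2)^2"
    using assms by (metis abs_ge_zero power2_abs power_mono)+
  then have "b^2 + c^2 \<le> U^2" by (simp add: power_divide) (smt (verit) zero_le_power2[of b] zero_le_power2[of c])
  then have BU: "B \<le> U" unfolding B_def using assms(1) real_sqrt_le_iff[of "b^2+c^2" "U^2"] by simp
  have B0: "B \<ge> 0" unfolding B_def by simp
  obtain t where t: "B * sin t = b" "B * cos t = c"
  proof (cases "B = 0")
    case True
    then have "b = 0" "c = 0" unfolding B_def by (simp_all add: sum_power2_eq_zero_iff)
    then show ?thesis using that[of 0] True by simp
  next
    case False
    then have Bp: "B > 0" using B0 by simp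
    have "(c/B)^2 + (b/B)^2 = 1" using Bp unfolding B_def
      by (simp add: power_divide add.commute) (metis add_divide_distrib less_irrefl divide_self)
    then obtain t where "c/B = cos t" "b/B = sin t" using sincos_total_2pi by metis
    then show ?thesis using that[of t] Bp by (simp add: field_simps)
  qed
  obtain \<beta> where \<beta>: "0 \<le> \<beta>" "\<beta> < 2*pi" "circ_eq \<beta> (t - x)" using rep_exists by blast
  obtain \<gamma> where \<gamma>: "0 \<le> \<gamma>" "\<gamma> < 2*pi" "circ_eq \<gamma> (- (y + b))" using rep_exists by blast
  define w where "w = ((0::real), B, a, (0::real), \<beta>, \<gamma>)"
  have "w \<in> Omega0 U" unfolding w_def Omega0_def using assms BU B0 \<beta> \<gamma> by auto
  moreover have "f_omega w (x', y', z') = (x' + a, y' + b, z' + c)"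
    if h: "circ_eq x' x" "circ_eq y' y" for x' y' z'
  proof -
    have "circ_eq (x' + \<beta>) (x + (t - x))" using circ_eq_add2[OF h(1) \<beta>(3)] .
    then have s1: "sin (x' + \<beta>) = sin t" "cos (x' + \<beta>) = cos t"
      using circ_eq_sin circ_eq_cos by auto
    have "circ_eq (y' + b + \<gamma>) (y + b + (- (y + b)))"
      using circ_eq_add2[OF circ_eq_add[OF h(2)] \<gamma>(3)] .
    then have s2: "sin (y' + b + \<gamma>) = 0" "cos (y' + b + \<gamma>) = 1"
      using circ_eq_sin circ_eq_cos by auto
    show ?thesis unfolding w_def f_omega_def fA_def fB_def fC_def
      using s1 s2 t by simp
  qed
  ultimately show ?thesis by blast
qed

lemma orbit_upd: "m \<le> n \<Longrightarrow> orbit (fun_upd \<omega> (Suc n) w) m p = orbit \<omega> m p"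
  by (induction m) auto

lemma reach:
  fixes n :: nat and U :: real
  assumes "U > 0" "circ_eq x2 x1" "circ_eq y2 y1"
  shows "\<bar>a\<bar> \<le> n*U/2 \<Longrightarrow> \<bar>b\<bar> \<le> n*U/2 \<Longrightarrow> \<bar>c\<bar> \<le> n*U/2 \<Longrightarrow>
    \<exists>\<omega>. (\<forall>i\<in>{1..n}. \<omega> i \<in> Omega0 U) \<and>
      orbit \<omega> n (x1, y1, z1) = (x1 + a, y1 + b, z1 + c) \<and>
      orbit \<omega> n (x2, y2, z2) = (x2 + a, y2 + b, z2 + c)"
proof (induction n arbitrary: a b c)
  case 0
  then show ?case by simp
next
  case (Suc n)
  define r where "r = real n / real (Suc n)"
  have r0: "0 \<le> r" "r \<le> 1" unfolding r_def by (simp_all add: field_simps)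
  have sc: "real n = r * real (Suc n)" unfolding r_def by simp
  have d: "\<bar>r * v\<bar> \<le> n*U/2" if "\<bar>v\<bar> \<le> Suc n * U/2" for v
  proof -
    have "\<bar>r * v\<bar> = r * \<bar>v\<bar>" using r0 by (simp add: abs_mult)
    also have "\<dots> \<le> r * (Suc n * U/2)" using mult_left_mono[OF that r0(1)] .
    also have "\<dots> = n*U/2" using sc by simp
    finally show ?thesis .
  qed
  have e: "\<bar>v - r * v\<bar> \<le> U/2" if "\<bar>v\<bar> \<le> Suc n * U/2" for v
  proof -
    have "v - r * v = v / real (Suc n)" unfolding r_def by (simp add: field_simps)
    then have "\<bar>v - r * v\<bar> = \<bar>v\<bar> / real (Suc n)" by simp
    also have "\<dots> \<le> U/2" using that by (simp add: field_simps)
    finally show ?thesis .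
  qed
  obtain \<omega> where om: "\<forall>i\<in>{1..n}. \<omega> i \<in> Omega0 U"
    "orbit \<omega> n (x1, y1, z1) = (x1 + r*a, y1 + r*b, z1 + r*c)"
    "orbit \<omega> n (x2, y2, z2) = (x2 + r*a, y2 + r*b, z2 + r*c)"
    using Suc.IH[OF d[OF Suc.prems(1)] d[OF Suc.prems(2)] d[OF Suc.prems(3)]] by blast
  obtain w where w: "w \<in> Omega0 U" "\<forall>x' y' z'. circ_eq x' (x1 + r*a) \<longrightarrow> circ_eq y' (y1 + r*b) \<longrightarrow>
            f_omega w (x', y', z') = (x' + (a - r*a), y' + (b - r*b), z' + (c - r*c))"
    using one_step[OF assms(1) e[OF Suc.prems(1)] e[OF Suc.prems(2)] e[OF Suc.prems(3)],
        of "x1 + r*a" "y1 + r*b"] by blast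
  define \<omega>' where "\<omega>' = fun_upd \<omega> (Suc n) w"
  have "\<forall>i\<in>{1..Suc n}. \<omega>' i \<in> Omega0 U" using om(1) w(1) unfolding \<omega>'_def by auto
  moreover have "orbit \<omega>' (Suc n) (x1, y1, z1) = (x1 + a, y1 + b, z1 + c)"
    unfolding \<omega>'_def using orbit_upd[of n n \<omega> w] om(2) w(2) circ_eq_refl by simp
  moreover have "orbit \<omega>' (Suc n) (x2, y2, z2) = (x2 + a, y2 + b, z2 + c)"
    unfolding \<omega>'_def using orbit_upd[of n n \<omega> w] om(3) w(2)
      circ_eq_add[OF assms(2)] circ_eq_add[OF assms(3)] by simp
  ultimately show ?case by blast
qed

lemma circ_dist_shift: "circ_dist (u + d) (v + d) = circ_dist u v"
  unfolding circ_dist_def by simp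

lemma circ_dist_self: "circ_dist u u = 0"
proof -
  have "(INF k::int. \<bar>u - u - 2 * pi * of_int k\<bar>) = 0"
  proof (rule antisym)
    show "(INF k::int. \<bar>u - u - 2 * pi * of_int k\<bar>) \<le> 0"
      using cINF_lower[of "\<lambda>k::int. \<bar>u - u - 2 * pi * of_int k\<bar>" UNIV 0]
      by (simp add: bdd_below_def) (meson abs_ge_zero)
    show "0 \<le> (INF k::int. \<bar>u - u - 2 * pi * of_int k\<bar>)"
      by (rule cINF_greatest) auto
  qed
  then show ?thesis unfolding circ_dist_def .
qed

theorem lemma3p8:
  fixes U :: real and x1 y1 z1 x2 y2 z2 :: real
  assumes "U > 0"
    and "\<not> torus_eq (x1, y1, z1) (x2, y2, z2)"
    and "circ_eq x1 x2" and "circ_eq y1 y2"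
  shows "\<forall>\<epsilon>>0. \<forall>xbar :: pt3. \<exists>N::nat. \<exists>\<omega>::nat \<Rightarrow> param.
           (\<forall>i\<in>{1..N}. \<omega> i \<in> Omega0 U) \<and>
           torus_dist (orbit \<omega> N (x1, y1, z1)) xbar < \<epsilon> \<and>
           torus_dist xbar (orbit \<omega> N (x2, y2, z2)) = torus_dist (x1, y1, z1) (x2, y2, z2)"
proof (intro allI impI)
  fix \<epsilon> :: real and xbar :: pt3
  assume "\<epsilon> > 0"
  obtain u v w where xb: "xbar = (u, v, w)" by (cases xbar) auto
  define a b c where "a = u - x1" and "b = v - y1" and "c = w - z1"
  obtain n :: nat where n: "(\<bar>a\<bar> + \<bar>b\<bar> + \<bar>c\<bar>) * 2 / U < n" using reals_Archimedean2 by blast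
  then have "\<bar>a\<bar> + \<bar>b\<bar> + \<bar>c\<bar> < n * U / 2" using assms(1) by (simp add: field_simps)
  then have h: "\<bar>a\<bar> \<le> n*U/2" "\<bar>b\<bar> \<le> n*U/2" "\<bar>c\<bar> \<le> n*U/2" by linarith+
  have c2: "circ_eq x2 x1" "circ_eq y2 y1" using assms(3,4) unfolding circ_eq_def
    by (metis minus_diff_eq mult_minus_right of_int_minus)+
  obtain \<omega> where om: "\<forall>i\<in>{1..n}. \<omega> i \<in> Omega0 U"
      "orbit \<omega> n (x1, y1, z1) = (x1 + a, y1 + b, z1 + c)"
      "orbit \<omega> n (x2, y2, z2) = (x2 + a, y2 + b, z2 + c)"
    using reach[OF assms(1) c2 h] by blast
  have "x1 + a = u" "y1 + b = v" "z1 + c = w" unfolding a_def b_def c_def by simp_all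
  then have o1: "orbit \<omega> n (x1, y1, z1) = xbar" using om(2) xb by simp
  have "torus_dist (orbit \<omega> n (x1, y1, z1)) xbar < \<epsilon>"
    using o1 xb \<open>\<epsilon> > 0\<close> by (simp add: torus_dist_def circ_dist_self)
  moreover have "torus_dist xbar (orbit \<omega> n (x2, y2, z2)) = torus_dist (x1, y1, z1) (x2, y2, z2)"
    using om(3) o1 om(2) by (auto simp: torus_dist_def circ_dist_shift[of x1 a x2, symmetric]
      circ_dist_shift[of y1 b y2, symmetric] circ_dist_shift[of z1 c z2, symmetric] add.commute)
  ultimately show "\<exists>N::nat. \<exists>\<omega>::nat \<Rightarrow> param.
           (\<forall>i\<in>{1..N}. \<omega> i \<in> Omega0 U) \<and>
           torus_dist (orbit \<omega> N (x1, y1, z1)) xbar < \<epsilon> \<and>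
           torus_dist xbar (orbit \<omega> N (x2, y2, z2)) = torus_dist (x1, y1, z1) (x2, y2, z2)"
    using om(1) by blast
qed

end
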